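(* $w^\ast(2,3)=17$. That is, every 2-coloring of $\{1,\dots,17\}$ contains a monochromatic double 3-term arithmetic progression, while the 2-coloring of $\{1,\dots,16\}$ given by the word $0010110100101101$ (the $n$-th letter being the color of $n$) contains no monochromatic double 3-term arithmetic progression.
   Context: An increasing sequence of positive integers $a_1<a_2<\cdots$ (finite or infinite) contains a double 3-term arithmetic progression if there are indices $i<j<k$ with $i+k=2j$ and $a_i+a_k=2a_j$. For a coloring of an interval, each color class is regarded as an increasing sequence by listing its elements in increasing order; a monochromatic double 3-term arithmetic progression is a double 3-term arithmetic progression in some color class. For integers $r,k$, $w^\ast(r,k)$ denotes the least integer $N$, if it exists, such that every $r$-coloring of $\{1,\dots,N\}$ has a monochromatic double $k$-term arithmetic progression (defined analogously with $k$ indices in arithmetic progression whose values are also in arithmetic progression). *)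

theory Defs
  imports Main
begin

(* A (finite) increasing sequence is represented by the list of its terms,
   indexed from 0. It contains a double k-term AP if there are indices
   i, i+d, ..., i+(k-1)d (d > 0) within range whose values form an AP. *)
definition has_double_ap :: "nat \<Rightarrow> nat list \<Rightarrow> bool" where
  "has_double_ap k xs \<longleftrightarrow>
     (\<exists>i d. d > 0 \<and> i + (k - 1) * d < length xs \<and>
        (\<forall>t<k. int (xs ! (i + t * d)) = int (xs ! i) + int t * (int (xs ! (i + d)) - int (xs ! i))))"

definition has_double_ap3 :: "nat list \<Rightarrow> bool" where
  "has_double_ap3 xs \<longleftrightarrow>
     (\<exists>i j k. i < j \<and> j < k \<and> k < length xs \<and> i + k = 2 * j \<and>
        xs ! i + xs ! k = 2 * xs ! j)"

definition color_class :: "(nat \<Rightarrow> 'c) \<Rightarrow> nat \<Rightarrow> 'c \<Rightarrow> nat list" where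
  "color_class f N c = sorted_list_of_set {n \<in> {1..N}. f n = c}"

definition mono_double_ap :: "nat \<Rightarrow> (nat \<Rightarrow> 'c) \<Rightarrow> nat \<Rightarrow> bool" where
  "mono_double_ap k f N \<longleftrightarrow> (\<exists>c. has_double_ap k (color_class f N c))"

definition mono_double_ap3 :: "(nat \<Rightarrow> 'c) \<Rightarrow> nat \<Rightarrow> bool" where
  "mono_double_ap3 f N \<longleftrightarrow> (\<exists>c. has_double_ap3 (color_class f N c))"

(* r-colorings of {1..N}: maps into {0..<r} (values outside {1..N} irrelevant) *)
definition w_star :: "nat \<Rightarrow> nat \<Rightarrow> nat" where
  "w_star r k = (LEAST N. \<forall>f :: nat \<Rightarrow> nat. (\<forall>n\<in>{1..N}. f n < r) \<longrightarrow> mono_double_ap k f N)"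

definition word16 :: "nat list" where
  "word16 = [0,0,1,0,1,1,0,1,0,0,1,0,1,1,0,1]"

definition word_coloring :: "nat \<Rightarrow> nat" where
  "word_coloring n = word16 ! (n - 1)"

end

theory Submission
  imports Defs
begin

lemma ap3_code[code]: "has_double_ap3 xs = (\<exists>i\<in>set [0..<length xs]. \<exists>j\<in>set [Suc i..<length xs].
    2*j-i < length xs \<and> xs!i + xs!(2*j-i) = 2*xs!j)"
proof
  assume "has_double_ap3 xs"
  then obtain i j k where h: "i < j" "j < k" "k < length xs" "i + k = 2 * j" "xs ! i + xs ! k = 2 * xs ! j"
    unfolding has_double_ap3_def by auto
  have "k = 2*j-i" using h by auto
  then show "\<exists>i\<in>set [0..<length xs]. \<exists>j\<in>set [Suc i..<length xs].
    2*j-i < length xs \<and> xs!i + xs!(2*j-i) = 2*xs!j" using h by (intro bexI[of _ i] bexI[of _ j]) auto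
next
  assume "\<exists>i\<in>set [0..<length xs]. \<exists>j\<in>set [Suc i..<length xs].
    2*j-i < length xs \<and> xs!i + xs!(2*j-i) = 2*xs!j"
  then obtain i j where h: "i < j" "j < length xs" "2*j-i < length xs" "xs!i + xs!(2*j-i) = 2*xs!j" by (auto simp: Suc_le_eq)
  then show "has_double_ap3 xs" unfolding has_double_ap3_def
    by (intro exI[of _ i] exI[of _ j] exI[of _ "2*j-i"]) auto
qed

lemma ap3_append: "has_double_ap3 xs \<Longrightarrow> has_double_ap3 (xs @ ys)"
proof -
  assume "has_double_ap3 xs"
  then obtain i j k where h: "i < j" "j < k" "k < length xs" "i + k = 2 * j" "xs ! i + xs ! k = 2 * xs ! j"
    unfolding has_double_ap3_def by blast
  have "(xs@ys) ! i = xs ! i" "(xs@ys) ! j = xs ! j" "(xs@ys) ! k = xs ! k"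
    using h by (simp_all add: nth_append)
  then show ?thesis unfolding has_double_ap3_def using h
    by (intro exI[of _ i] exI[of _ j] exI[of _ k]) simp
qed

definition cl :: "bool list \<Rightarrow> bool \<Rightarrow> nat list" where
  "cl xs b = filter (\<lambda>n. xs!(n-1) = b) [1..<Suc (length xs)]"

definition bad :: "bool list \<Rightarrow> bool" where
  "bad xs \<longleftrightarrow> has_double_ap3 (cl xs True) \<or> has_double_ap3 (cl xs False)"

lemma cl_append: "\<exists>zs. cl (xs @ ys) b = cl xs b @ zs"
proof -
  have "[1..<Suc (length (xs@ys))] = [1..<Suc (length xs)] @ [Suc (length xs)..<Suc (length xs) + length ys]"
    using upt_add_eq_append[of 1 "Suc (length xs)" "length ys"] by simp
  moreover have "filter (\<lambda>n. (xs@ys)!(n-1) = b) [1..<Suc (length xs)] = cl xs b"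
    unfolding cl_def by (rule filter_cong) (auto simp: nth_append)
  ultimately show ?thesis unfolding cl_def by auto
qed

lemma bad_append: "bad xs \<Longrightarrow> bad (xs @ ys)"
  unfolding bad_def using cl_append ap3_append by metis

lemma cl_snoc: "cl (xs @ [y]) b = cl xs b @ (if y = b then [Suc (length xs)] else [])"
  unfolding cl_def
  by (auto simp: nth_append intro!: filter_cong)

fun chk :: "nat \<Rightarrow> nat list \<Rightarrow> nat list \<Rightarrow> bool" where
  "chk n (a # as) (b # c # cs) = (if c + n = 2 * a then True else chk n as cs)"
| "chk n _ _ = False"

lemma chk_sound: "chk n as bs \<Longrightarrow>
   \<exists>p. Suc (2*p) < length bs \<and> p < length as \<and> bs ! Suc (2*p) + n = 2 * as ! p"
proof (induction n as bs rule: chk.induct)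
  case (1 n a as b c cs)
  show ?case
  proof (cases "c + n = 2 * a")
    case True
    then show ?thesis by (intro exI[of _ 0]) simp
  next
    case False
    with "1.prems" have "chk n as cs" by simp
    from "1.IH"[OF False this] obtain p where
      p: "Suc (2*p) < length cs" "p < length as" "cs ! Suc (2*p) + n = 2 * as ! p" by blast
    have "(b # c # cs) ! Suc (2 * Suc p) = cs ! Suc (2*p)" by simp
    moreover have "(a # as) ! Suc p = as ! p" by simp
    ultimately show ?thesis using p by (intro exI[of _ "Suc p"]) simp
  qed
qed auto

lemma chk_ap: "chk n A A \<Longrightarrow> has_double_ap3 (rev A @ [n])"
proof -
  assume h: "chk n A A"
  from chk_sound[OF h] obtain p where p: "Suc (2*p) < length A" "A ! Suc (2*p) + n = 2 * A ! p" by blast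
  let ?r = "n # A"
  define L where "L = length ?r"
  have rv: "rev A @ [n] = rev ?r" by simp
  have nth: "q < L \<Longrightarrow> rev ?r ! (L - 1 - q) = ?r ! q" for q
  proof -
    assume q: "q < L"
    have "rev ?r ! (L - 1 - q) = ?r ! (length ?r - Suc (L - 1 - q))"
      by (rule rev_nth) (use q in \<open>simp add: L_def\<close>)
    also have "length ?r - Suc (L - 1 - q) = q" using q unfolding L_def by simp
    finally show ?thesis .
  qed
  have L: "L = Suc (length A)" unfolding L_def by simp
  have a1: "rev ?r ! (L - 1 - Suc (Suc (2*p))) = A ! Suc (2*p)"
    using nth[of "Suc (Suc (2*p))"] p(1) L by simp
  have a2: "rev ?r ! (L - 1 - Suc p) = A ! p"
    using nth[of "Suc p"] p(1) L by simp
  have a3: "rev ?r ! (L - 1 - 0) = n"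
    using nth[of 0] L by simp
  have ar: "L - 1 - Suc (Suc (2*p)) < L - 1 - Suc p" "L - 1 - Suc p < L - 1 - 0" "L - 1 - 0 < length (rev ?r)"
    "(L - 1 - Suc (Suc (2*p))) + (L - 1 - 0) = 2 * (L - 1 - Suc p)"
    using p(1) L by (simp_all add: L_def)
  have v: "rev ?r ! (L - 1 - Suc (Suc (2*p))) + rev ?r ! (L - 1 - 0) = 2 * rev ?r ! (L - 1 - Suc p)"
    unfolding a1 a2 a3 by (rule p(2))
  show ?thesis unfolding rv has_double_ap3_def
    using ar v by blast
qed

fun srch :: "nat \<Rightarrow> nat \<Rightarrow> nat list \<Rightarrow> nat list \<Rightarrow> bool" where
  "srch 0 n A B = False"
| "srch (Suc m) n A B = (if (if chk n A A then True else srch m (Suc n) (n # A) B)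
     then (if chk n B B then True else srch m (Suc n) A (n # B)) else False)"

lemma srch_SucD: "srch (Suc m) n A B \<Longrightarrow>
  (chk n A A \<or> srch m (Suc n) (n # A) B) \<and> (chk n B B \<or> srch m (Suc n) A (n # B))"
  by (simp split: if_splits)

lemma srch_sound: "srch m (Suc (length xs)) (rev (cl xs True)) (rev (cl xs False)) \<Longrightarrow> length ys = m \<Longrightarrow> bad (xs @ ys)"
proof (induction m arbitrary: xs ys)
  case 0 then show ?case by simp
next
  case (Suc m)
  then obtain y ys' where ys: "ys = y # ys'" "length ys' = m" by (cases ys) auto
  have split: "xs @ ys = (xs @ [y]) @ ys'" using ys by simp
  let ?n = "Suc (length xs)"
  let ?A = "rev (cl xs True)" and ?B = "rev (cl xs False)"
  have D: "(chk ?n ?A ?A \<or> srch m (Suc ?n) (?n # ?A) ?B) \<and> (chk ?n ?B ?B \<or> srch m (Suc ?n) ?A (?n # ?B))"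
    by (rule srch_SucD) (rule Suc.prems(1))
  have lenS: "Suc (length (xs @ [y])) = Suc ?n" by simp
  have "bad (xs @ [y]) \<or> srch m (Suc (length (xs@[y]))) (rev (cl (xs@[y]) True)) (rev (cl (xs@[y]) False))"
  proof (cases y)
    case True
    have c1: "rev (cl (xs@[y]) True) = ?n # ?A" "rev (cl (xs@[y]) False) = ?B"
      using True by (simp_all add: cl_snoc)
    from D have "chk ?n ?A ?A \<or> srch m (Suc ?n) (?n # ?A) ?B" by blast
    then show ?thesis
    proof
      assume c: "chk ?n ?A ?A"
      have "has_double_ap3 (cl (xs @ [y]) True)" using chk_ap[OF c] True by (simp add: cl_snoc)
      then show ?thesis unfolding bad_def by blast
    next
      assume "srch m (Suc ?n) (?n # ?A) ?B"
      then show ?thesis unfolding c1 lenS by blast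
    qed
  next
    case False
    have c1: "rev (cl (xs@[y]) True) = ?A" "rev (cl (xs@[y]) False) = ?n # ?B"
      using False by (simp_all add: cl_snoc)
    from D have "chk ?n ?B ?B \<or> srch m (Suc ?n) ?A (?n # ?B)" by blast
    then show ?thesis
    proof
      assume c: "chk ?n ?B ?B"
      have "has_double_ap3 (cl (xs @ [y]) False)" using chk_ap[OF c] False by (simp add: cl_snoc)
      then show ?thesis unfolding bad_def by blast
    next
      assume "srch m (Suc ?n) ?A (?n # ?B)"
      then show ?thesis unfolding c1 lenS by blast
    qed
  qed
  then show ?case
  proof
    assume "bad (xs @ [y])"
    then show ?thesis unfolding split by (rule bad_append)
  next
    assume "srch m (Suc (length (xs@[y]))) (rev (cl (xs@[y]) True)) (rev (cl (xs@[y]) False))"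
    from Suc.IH[OF this ys(2)] show ?thesis unfolding split .
  qed
qed

lemma srch17: "srch 17 1 [] []"
  by code_simp

lemma color_class_eq: "color_class f N c = filter (\<lambda>n. f n = c) [1..<Suc N]"
proof -
  have "{n \<in> {1..N}. f n = c} = set (filter (\<lambda>n. f n = c) [1..<Suc N])" by auto
  then show ?thesis unfolding color_class_def
    by (simp only:) (rule sorted_list_of_set.idem_if_sorted_distinct, (intro sorted_wrt_filter, simp del: upt_Suc), simp del: upt_Suc)
qed

lemma mono_iff_bad:
  assumes "\<forall>n\<in>{1..N}. f n < (2::nat)"
  shows "mono_double_ap3 f N \<longleftrightarrow> bad (map (\<lambda>n. f n = 1) [1..<Suc N])"
proof -
  let ?xs = "map (\<lambda>n. f n = 1) [1..<Suc N]"
  have L: "length ?xs = N" by simp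
  have nx: "n \<in> set [1..<Suc N] \<Longrightarrow> ?xs!(n-1) = (f n = 1)" for n
  proof -
    assume "n \<in> set [1..<Suc N]"
    then have n: "1 \<le> n" "n - 1 < N" by auto
    then have "?xs!(n-1) = (\<lambda>n. f n = 1) ([1..<Suc N] ! (n-1))" by (simp del: upt_Suc)
    also have "[1..<Suc N] ! (n-1) = n" using n by (simp del: upt_Suc)
    finally show ?thesis .
  qed
  have c1: "cl ?xs True = color_class f N 1"
    unfolding cl_def color_class_eq L by (rule filter_cong) (auto simp: nx simp del: upt_Suc)
  have c0: "cl ?xs False = color_class f N 0"
    unfolding cl_def color_class_eq L
  proof (rule filter_cong)
    fix n assume "n \<in> set [1..<Suc N]"
    with assms have "f n < 2" by auto
    then show "(?xs!(n-1) = False) = (f n = 0)" using nx[OF \<open>n \<in> _\<close>] by auto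
  qed simp
  have c2: "c \<ge> 2 \<Longrightarrow> color_class f N c = []" for c
    unfolding color_class_eq filter_empty_conv
  proof (intro ballI)
    fix x assume "c \<ge> 2" "x \<in> set [1..<Suc N]"
    then have "f x < 2" using assms by (simp del: upt_Suc)
    then show "f x \<noteq> c" using \<open>c \<ge> 2\<close> by simp
  qed
  have e: "\<not> has_double_ap3 []" by (simp add: has_double_ap3_def)
  have "(\<exists>c. has_double_ap3 (color_class f N c)) \<longleftrightarrow> has_double_ap3 (color_class f N 1) \<or> has_double_ap3 (color_class f N 0)"
  proof
    assume "\<exists>c. has_double_ap3 (color_class f N c)"
    then obtain c where hc: "has_double_ap3 (color_class f N c)" by blast
    have "\<not> c \<ge> 2" using c2 hc e by metis
    then have "c = 0 \<or> c = 1" by linarith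
    then show "has_double_ap3 (color_class f N 1) \<or> has_double_ap3 (color_class f N 0)" using hc by blast
  qed blast
  then show ?thesis unfolding mono_double_ap3_def bad_def c1 c0 by blast
qed

lemma ap_iff: "has_double_ap 3 xs \<longleftrightarrow> has_double_ap3 xs"
proof
  assume "has_double_ap 3 xs"
  then obtain i d where d: "d > 0" "i + (3 - 1) * d < length xs"
    and h: "\<forall>t<3. int (xs ! (i + t * d)) = int (xs ! i) + int t * (int (xs ! (i + d)) - int (xs ! i))"
    unfolding has_double_ap_def by blast
  have "int (xs ! (i + 2 * d)) = int (xs ! i) + int 2 * (int (xs ! (i + d)) - int (xs ! i))"
    using h[rule_format, of 2] by simp
  then have "int (xs ! i + xs ! (i + 2*d)) = int (2 * xs ! (i + d))" by simp
  then have "xs ! i + xs ! (i + 2*d) = 2 * xs ! (i + d)" by (simp only: of_nat_eq_iff)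
  moreover have "i + 2*d < length xs" using d by simp
  ultimately show "has_double_ap3 xs" unfolding has_double_ap3_def
    using d by (intro exI[of _ i] exI[of _ "i+d"] exI[of _ "i+2*d"]) auto
next
  assume "has_double_ap3 xs"
  then obtain i j k where h: "i < j" "j < k" "k < length xs" "i + k = 2 * j" "xs ! i + xs ! k = 2 * xs ! j"
    unfolding has_double_ap3_def by blast
  define d where "d = j - i"
  have jk: "j = i + d" "k = i + 2*d" using h d_def by auto
  have "\<forall>t<3. int (xs ! (i + t * d)) = int (xs ! i) + int t * (int (xs ! (i + d)) - int (xs ! i))"
  proof (intro allI impI)
    fix t :: nat assume "t < 3"
    have e: "int (xs ! i + xs ! (i+2*d)) = int (2 * xs ! (i+d))" using h(5) jk by simp
    then have e2: "int (xs ! i) + int (xs ! (i+2*d)) = 2 * int (xs ! (i+d))" by simp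
    have "t = 0 \<or> t = 1 \<or> t = 2" using \<open>t < 3\<close> by linarith
    then show "int (xs ! (i + t * d)) = int (xs ! i) + int t * (int (xs ! (i + d)) - int (xs ! i))"
    proof (elim disjE)
      assume "t = 2" then show ?thesis using e2 by simp
    qed simp_all
  qed
  moreover have "0 < d" "i + (3 - 1) * d < length xs" using h jk by auto
  ultimately have X: "0 < d \<and> i + (3 - 1) * d < length xs \<and> (\<forall>t<3. int (xs ! (i + t * d)) = int (xs ! i) + int t * (int (xs ! (i + d)) - int (xs ! i)))"
    by (intro conjI)
  show "has_double_ap 3 xs" unfolding has_double_ap_def
    by (rule exI[where x=i], rule exI[where x=d], rule X)
qed

lemma mono_eq: "mono_double_ap 3 f N = mono_double_ap3 f N"
  unfolding mono_double_ap_def mono_double_ap3_def ap_iff ..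

lemma part2: "\<forall>f :: nat \<Rightarrow> nat. (\<forall>n\<in>{1..17}. f n < 2) \<longrightarrow> mono_double_ap3 f 17"
proof (intro allI impI)
  fix f :: "nat \<Rightarrow> nat" assume a: "\<forall>n\<in>{1..17}. f n < 2"
  have "bad ([] @ map (\<lambda>n. f n = 1) [1..<Suc 17])"
  proof (rule srch_sound)
    have "cl [] b = []" for b by (simp add: cl_def)
    then show "srch 17 (Suc (length [])) (rev (cl [] True)) (rev (cl [] False))"
      using srch17 by (simp only: list.size rev.simps One_nat_def[symmetric])
    show "length (map (\<lambda>n. f n = 1) [1..<Suc 17]) = 17" by (simp only: length_map length_upt)
  qed
  then show "mono_double_ap3 f 17" using mono_iff_bad[OF a] by (simp only: append_Nil)
qed

lemma wc2: "\<forall>n\<in>{1..16}. word_coloring n < 2"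
proof
  fix n :: nat assume "n \<in> {1..16}"
  then have "n - 1 < 16" by (cases n) auto
  moreover have "length word16 = 16" by (simp add: word16_def)
  ultimately have "n - 1 < length word16" by simp
  then have "word16 ! (n-1) \<in> set word16" by (rule nth_mem)
  moreover have "set word16 \<subseteq> {0,1}" by (simp add: word16_def)
  ultimately have "word_coloring n \<in> {0,1}" unfolding word_coloring_def by blast
  then show "word_coloring n < 2" by auto
qed

lemma wc_bad16': "\<not> bad (map (\<lambda>n. (word16 ! (n - 1)) = 1) [1..<Suc 16])"
  by code_simp

lemma wc_bad16: "\<not> bad (map (\<lambda>n. word_coloring n = 1) [1..<Suc 16])"
proof -
  have e: "(\<lambda>n. word_coloring n = 1) = (\<lambda>n. (word16 ! (n - 1)) = 1)"
    by (rule ext) (simp only: word_coloring_def)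
  show ?thesis unfolding e by (rule wc_bad16')
qed

lemma part3: "\<not> mono_double_ap3 word_coloring 16"
  using mono_iff_bad[OF wc2] wc_bad16 by blast

lemma part3N: "N \<le> 16 \<Longrightarrow> \<not> mono_double_ap3 word_coloring N"
proof
  assume N: "N \<le> 16" and m: "mono_double_ap3 word_coloring N"
  have a: "\<forall>n\<in>{1..N}. word_coloring n < 2" using wc2 N by auto
  have "bad (map (\<lambda>n. word_coloring n = 1) [1..<Suc N])" using m mono_iff_bad[OF a] by blast
  then have "bad (map (\<lambda>n. word_coloring n = 1) [1..<Suc N] @ map (\<lambda>n. word_coloring n = 1) [Suc N..<Suc 16])"
    by (rule bad_append)
  moreover have "[1..<Suc N] @ [Suc N..<Suc 16] = [1..<Suc 16]"
  proof -
    have e: "Suc N + (16 - N) = Suc 16" using N by simp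
    have "1 \<le> Suc N" by simp
    from upt_add_eq_append[OF this, of "16 - N"]
    have "[1..<Suc 16] = [1..<Suc N] @ [Suc N..<Suc 16]" by (simp only: e)
    then show ?thesis by (rule sym)
  qed
  ultimately have "bad (map (\<lambda>n. word_coloring n = 1) [1..<Suc 16])"
    by (simp only: map_append[symmetric])
  then show False using wc_bad16 by blast
qed

theorem theorem1:
  shows "w_star 2 3 = 17
    \<and> (\<forall>f :: nat \<Rightarrow> nat. (\<forall>n\<in>{1..17}. f n < 2) \<longrightarrow> mono_double_ap3 f 17)
    \<and> \<not> mono_double_ap3 word_coloring 16"
proof (intro conjI part2 part3)
  show "w_star 2 3 = 17" unfolding w_star_def mono_eq
  proof (rule Least_equality)
    show "\<forall>f :: nat \<Rightarrow> nat. (\<forall>n\<in>{1..17}. f n < 2) \<longrightarrow> mono_double_ap3 f 17" by (rule part2)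
  next
    fix y assume y: "\<forall>f :: nat \<Rightarrow> nat. (\<forall>n\<in>{1..y}. f n < 2) \<longrightarrow> mono_double_ap3 f y"
    show "17 \<le> y"
    proof (rule ccontr)
      assume "\<not> 17 \<le> y"
      then have "y \<le> 16" by simp
      then have "\<forall>n\<in>{1..y}. word_coloring n < 2" using wc2 by auto
      then have "mono_double_ap3 word_coloring y" using y by blast
      then show False using part3N \<open>y \<le> 16\<close> by blast
    qed
  qed
qed

end
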